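(* Let $R$, $G$, $*$, $\sigma$ and $\mathcal{S}$ be as in the context. If $\mathcal{S}$ is anticommutative, then $c_x=x^*x^{-1}$ lies in the center $\mathcal{Z}(G)$ of $G$ for every $x\in G$.
   Context: Throughout, $R$ is a commutative ring with unity with $\operatorname{char}(R)\neq 2$, and $\mathcal{U}(R)$ is its unit group. $G$ is a group with an involution $*$, i.e. a map $x\mapsto x^*$ with $(xy)^*=y^*x^*$ and $(x^* )^*=x$. The map $\sigma:G\to\mathcal{U}(R)$ is a nontrivial group homomorphism with kernel $N=\ker\sigma$, and it is compatible with $*$: $xx^*\in N$ for all $x\in G$. The group ring $RG$ carries the involution $\left(\sum_{x\in G}\alpha_x x\right)^{\sigma*}=\sum_{x\in G}\sigma(x)\alpha_x x^*$. Write $G_*=\{x\in G: x^*=x\}$ and $N_*=G_*\cap N$. Let $\mathcal{S}$ be the $R$-submodule of $RG$ spanned by the union of the following three sets: - $2\mathcal{S}_1=\{2x: x\in N_*\}$; - $\mathcal{S}_2=\{\alpha x: x\in G_*\setminus N,\ \alpha\in R,\ \alpha(1-\sigma(x))=0\}$; - $\mathcal{S}_3=\{x+\sigma(x)x^*: x\in G\setminus G_*\}$. $\mathcal{S}$ is called anticommutative if $ab+ba=0$ for all $a,b\in\mathcal{S}$. *)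

theory Defs
  imports "HOL-Algebra.Group"
begin

text \<open>The group ring RG, modelled as finitely supported functions from the carrier
of G to R (zero outside the carrier).\<close>

definition gr_supp :: "('g, 'b) monoid_scheme \<Rightarrow> ('g \<Rightarrow> 'r::comm_ring_1) \<Rightarrow> 'g set" where
  "gr_supp G a = {h \<in> carrier G. a h \<noteq> 0}"

definition gr_mult :: "('g, 'b) monoid_scheme \<Rightarrow> ('g \<Rightarrow> 'r::comm_ring_1) \<Rightarrow> ('g \<Rightarrow> 'r) \<Rightarrow> 'g \<Rightarrow> 'r" where
  "gr_mult G a b = (\<lambda>g. if g \<in> carrier G
      then (\<Sum>h\<in>gr_supp G a. a h * b (inv\<^bsub>G\<^esub> h \<otimes>\<^bsub>G\<^esub> g)) else 0)"

definition gr_elem :: "'r::comm_ring_1 \<Rightarrow> 'g \<Rightarrow> 'g \<Rightarrow> 'r" where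
  "gr_elem \<alpha> x = (\<lambda>g. if g = x then \<alpha> else 0)"

text \<open>The generating set S1' \<union> S2 \<union> S3 (with S1' = 2 S1).\<close>
definition S_gens :: "('g, 'b) monoid_scheme \<Rightarrow> ('g \<Rightarrow> 'g) \<Rightarrow> ('g \<Rightarrow> 'r::comm_ring_1) \<Rightarrow> ('g \<Rightarrow> 'r) set" where
  "S_gens G star \<sigma> =
     {gr_elem 2 x | x. x \<in> carrier G \<and> star x = x \<and> \<sigma> x = 1}
   \<union> {gr_elem \<alpha> x | x \<alpha>. x \<in> carrier G \<and> star x = x \<and> \<sigma> x \<noteq> 1 \<and> \<alpha> * (1 - \<sigma> x) = 0}
   \<union> {(\<lambda>g. gr_elem 1 x g + gr_elem (\<sigma> x) (star x) g) | x. x \<in> carrier G \<and> star x \<noteq> x}"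

inductive_set gr_span :: "('g \<Rightarrow> 'r::comm_ring_1) set \<Rightarrow> ('g \<Rightarrow> 'r) set" for A where
  zero: "(\<lambda>g. 0) \<in> gr_span A"
| gen: "a \<in> A \<Longrightarrow> a \<in> gr_span A"
| add: "a \<in> gr_span A \<Longrightarrow> b \<in> gr_span A \<Longrightarrow> (\<lambda>g. a g + b g) \<in> gr_span A"
| smult: "a \<in> gr_span A \<Longrightarrow> (\<lambda>g. r * a g) \<in> gr_span A"

definition S_set :: "('g, 'b) monoid_scheme \<Rightarrow> ('g \<Rightarrow> 'g) \<Rightarrow> ('g \<Rightarrow> 'r::comm_ring_1) \<Rightarrow> ('g \<Rightarrow> 'r) set" where
  "S_set G star \<sigma> = gr_span (S_gens G star \<sigma>)"

definition anticommutative :: "('g, 'b) monoid_scheme \<Rightarrow> ('g \<Rightarrow> 'r::comm_ring_1) set \<Rightarrow> bool" where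
  "anticommutative G S \<longleftrightarrow>
     (\<forall>a\<in>S. \<forall>b\<in>S. (\<lambda>g. gr_mult G a b g + gr_mult G b a g) = (\<lambda>g. 0))"

definition group_center :: "('g, 'b) monoid_scheme \<Rightarrow> 'g set" where
  "group_center G = {z \<in> carrier G. \<forall>y\<in>carrier G. z \<otimes>\<^bsub>G\<^esub> y = y \<otimes>\<^bsub>G\<^esub> z}"

end

theory Submission
  imports Defs
begin

definition tw :: "'r::comm_ring_1 \<Rightarrow> 'g \<Rightarrow> 'r \<Rightarrow> 'g \<Rightarrow> 'g \<Rightarrow> 'r" where
  "tw a x b y = (\<lambda>g. gr_elem a x g + gr_elem b y g)"

lemma gr_mult_F:
  assumes "finite F" "F \<subseteq> carrier G" "gr_supp G a \<subseteq> F"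
  shows "gr_mult G a b g = (if g \<in> carrier G then (\<Sum>h\<in>F. a h * b (inv\<^bsub>G\<^esub> h \<otimes>\<^bsub>G\<^esub> g)) else 0)"
proof -
  have "(\<Sum>h\<in>gr_supp G a. a h * b (inv\<^bsub>G\<^esub> h \<otimes>\<^bsub>G\<^esub> g)) = (\<Sum>h\<in>F. a h * b (inv\<^bsub>G\<^esub> h \<otimes>\<^bsub>G\<^esub> g))"
    apply (rule sum.mono_neutral_left)
    using assms by (auto simp: gr_supp_def)
  then show ?thesis by (simp add: gr_mult_def)
qed

lemma (in group) inv_eq_iff: "h \<in> carrier G \<Longrightarrow> g \<in> carrier G \<Longrightarrow> y \<in> carrier G \<Longrightarrow>
   (inv h \<otimes> g = y) = (h \<otimes> y = g)"
  by (metis inv_solve_left')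

lemma (in group) tw_mult:
  assumes "x1 \<in> carrier G" "x2 \<in> carrier G" "y1 \<in> carrier G" "y2 \<in> carrier G" "g \<in> carrier G"
  shows "gr_mult G (tw a1 x1 a2 x2) (tw b1 y1 b2 y2) g =
     (if x1 \<otimes> y1 = g then a1*b1 else 0) + (if x1 \<otimes> y2 = g then a1*b2 else 0)
   + (if x2 \<otimes> y1 = g then a2*b1 else 0) + (if x2 \<otimes> y2 = g then a2*b2 else 0)"
proof -
  have s: "gr_supp G (tw a1 x1 a2 x2) \<subseteq> {x1, x2}"
    by (auto simp: gr_supp_def tw_def gr_elem_def)
  have e: "\<And>h y. h \<in> carrier G \<Longrightarrow> y \<in> carrier G \<Longrightarrow> (inv h \<otimes> g = y) = (h \<otimes> y = g)"
    using assms(5) inv_eq_iff by blast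
  have b: "\<And>h. h \<in> carrier G \<Longrightarrow> tw b1 y1 b2 y2 (inv h \<otimes> g) =
      (if h \<otimes> y1 = g then b1 else 0) + (if h \<otimes> y2 = g then b2 else 0)"
    using e assms by (simp add: tw_def gr_elem_def)
  have "gr_mult G (tw a1 x1 a2 x2) (tw b1 y1 b2 y2) g =
     (\<Sum>h\<in>{x1,x2}. tw a1 x1 a2 x2 h * tw b1 y1 b2 y2 (inv h \<otimes> g))"
    using gr_mult_F[OF _ _ s] assms by simp
  also have "\<dots> = (if x1 \<otimes> y1 = g then a1*b1 else 0) + (if x1 \<otimes> y2 = g then a1*b2 else 0)
   + (if x2 \<otimes> y1 = g then a2*b1 else 0) + (if x2 \<otimes> y2 = g then a2*b2 else 0)"
  proof (cases "x1 = x2")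
    case True
    then show ?thesis using assms by (simp add: b, simp add: tw_def gr_elem_def algebra_simps)
  next
    case False
    then show ?thesis using assms by (simp add: b, simp add: tw_def gr_elem_def algebra_simps)
  qed
  finally show ?thesis .
qed

locale acs = group G for G :: "('g, 'b) monoid_scheme" (structure) +
  fixes star :: "'g \<Rightarrow> 'g" and \<sigma> :: "'g \<Rightarrow> 'r::comm_ring_1"
  assumes two_nz: "(2::'r) \<noteq> 0"
    and star_closed[simp]: "\<And>x. x \<in> carrier G \<Longrightarrow> star x \<in> carrier G"
    and star_mult: "\<And>x y. x \<in> carrier G \<Longrightarrow> y \<in> carrier G \<Longrightarrow>
                       star (x \<otimes> y) = star y \<otimes> star x"
    and star_star[simp]: "\<And>x. x \<in> carrier G \<Longrightarrow> star (star x) = x"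
    and sigma_unit: "\<And>x. x \<in> carrier G \<Longrightarrow> \<sigma> x dvd 1"
    and sigma_hom: "\<And>x y. x \<in> carrier G \<Longrightarrow> y \<in> carrier G \<Longrightarrow>
                       \<sigma> (x \<otimes> y) = \<sigma> x * \<sigma> y"
    and compat: "\<And>x. x \<in> carrier G \<Longrightarrow> \<sigma> (x \<otimes> star x) = 1"
    and anticomm: "anticommutative G (S_set G star \<sigma>)"
begin

lemma two_unit_nz: "u dvd 1 \<Longrightarrow> (2::'r) * u \<noteq> 0"
proof
  assume "u dvd 1" "2 * u = 0"
  then obtain v where "1 = u * v" by (auto elim: dvdE)
  then have "(2::'r) = 2 * u * v" by (simp add: mult.assoc)
  with \<open>2 * u = 0\<close> two_nz show False by simp
qed

lemma one_nz: "(1::'r) \<noteq> 0"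
proof
  assume "(1::'r) = 0"
  then have "(2::'r) = 0" by (metis one_add_one add_0)
  with two_nz show False by simp
qed

lemma AC:
  assumes "tw a1 x1 a2 x2 \<in> S_set G star \<sigma>" "tw b1 y1 b2 y2 \<in> S_set G star \<sigma>"
    "x1 \<in> carrier G" "x2 \<in> carrier G" "y1 \<in> carrier G" "y2 \<in> carrier G" "g \<in> carrier G"
  shows "(if x1 \<otimes> y1 = g then a1*b1 else 0) + (if x1 \<otimes> y2 = g then a1*b2 else 0)
   + (if x2 \<otimes> y1 = g then a2*b1 else 0) + (if x2 \<otimes> y2 = g then a2*b2 else 0)
   + ((if y1 \<otimes> x1 = g then b1*a1 else 0) + (if y1 \<otimes> x2 = g then b1*a2 else 0)
   + (if y2 \<otimes> x1 = g then b2*a1 else 0) + (if y2 \<otimes> x2 = g then b2*a2 else 0)) = 0"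
proof -
  have "(\<lambda>g. gr_mult G (tw a1 x1 a2 x2) (tw b1 y1 b2 y2) g + gr_mult G (tw b1 y1 b2 y2) (tw a1 x1 a2 x2) g) = (\<lambda>g. 0)"
    using anticomm assms(1,2) unfolding anticommutative_def by blast
  then have "gr_mult G (tw a1 x1 a2 x2) (tw b1 y1 b2 y2) g + gr_mult G (tw b1 y1 b2 y2) (tw a1 x1 a2 x2) g = 0"
    by (drule_tac x=g in fun_cong) simp
  then show ?thesis using assms by (simp only: tw_mult)
qed

lemma in_S3: "x \<in> carrier G \<Longrightarrow> star x \<noteq> x \<Longrightarrow> tw 1 x (\<sigma> x) (star x) \<in> S_set G star \<sigma>"
  unfolding S_set_def tw_def
  by (rule gr_span.gen) (unfold S_gens_def, rule UnI2, blast)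

lemma in_S2: assumes "w \<in> carrier G" "star w = w" "2 * (1 - \<sigma> w) = 0"
  shows "tw 2 w 0 w \<in> S_set G star \<sigma>"
proof -
  have e: "tw 2 w 0 w = gr_elem 2 w" by (auto simp: tw_def gr_elem_def)
  have "gr_elem 2 w \<in> gr_span (S_gens G star \<sigma>)"
  proof (cases "\<sigma> w = 1")
    case True
    have "gr_elem 2 w \<in> {gr_elem 2 x | x. x \<in> carrier G \<and> star x = x \<and> \<sigma> x = 1}"
      using assms True by auto
    then have "gr_elem 2 w \<in> S_gens G star \<sigma>" unfolding S_gens_def by (rule UnI1[OF UnI1])
    then show ?thesis by (rule gr_span.gen)
  next
    case False
    have "gr_elem 2 w \<in> {gr_elem \<alpha> x | x \<alpha>. x \<in> carrier G \<and> star x = x \<and> \<sigma> x \<noteq> 1 \<and> \<alpha> * (1 - \<sigma> x) = 0}"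
      apply (rule CollectI)
      apply (rule exI[of _ w], rule exI[of _ 2])
      using assms False by simp
    then have "gr_elem 2 w \<in> S_gens G star \<sigma>" unfolding S_gens_def by (rule UnI1[OF UnI2])
    then show ?thesis by (rule gr_span.gen)
  qed
  then show ?thesis unfolding e S_set_def .
qed


lemma four_eq: "4 * a = a + a + (a + a)" for a :: 'r
  by (simp add: algebra_simps)

lemma two_eq: "2 * (1 + a) = 1 * 1 + 0 + 0 + a + (1 * 1 + 0 + 0 + a)" for a :: 'r
  by (simp add: algebra_simps)

lemma unit_cancel: "u dvd 1 \<Longrightarrow> a * u = 0 \<Longrightarrow> a = (0::'r)"
  by (metis dvdE mult.assoc mult_1_right mult_zero_left)

lemma lcanc: "x \<in> carrier G \<Longrightarrow> y \<in> carrier G \<Longrightarrow> z \<in> carrier G \<Longrightarrow> (x \<otimes> y = x \<otimes> z) = (y = z)"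
  by simp

lemma rcanc: "x \<in> carrier G \<Longrightarrow> y \<in> carrier G \<Longrightarrow> z \<in> carrier G \<Longrightarrow> (y \<otimes> x = z \<otimes> x) = (y = z)"
  by simp

lemma norm:
  assumes x: "x \<in> carrier G" and nx: "star x \<noteq> x"
  shows "x \<otimes> star x = star x \<otimes> x" "(4::'r) = 0" "star x \<otimes> star x = x \<otimes> x"
    "2 * (1 + \<sigma> x * \<sigma> x) = 0"
proof -
  let ?s = "\<sigma> x"
  have xs: "star x \<in> carrier G" using x by simp
  have S: "tw 1 x ?s (star x) \<in> S_set G star \<sigma>" using in_S3 x nx .
  have su: "?s dvd 1" using sigma_unit x .
  have ne1: "x \<otimes> x \<noteq> x \<otimes> star x" using x xs nx by simp
  have ne2: "star x \<otimes> star x \<noteq> x \<otimes> star x" using x xs nx by simp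
  note E1 = AC[OF S S x xs x xs m_closed[OF x xs]]
  show c1: "x \<otimes> star x = star x \<otimes> x"
  proof (rule ccontr)
    assume "x \<otimes> star x \<noteq> star x \<otimes> x"
    then have "star x \<otimes> x \<noteq> x \<otimes> star x" by (rule not_sym)
    with E1 ne1 ne2 have "?s + ?s = 0" by (simp only: if_True if_False simp_thms add_0_left add_0_right mult_1_left mult_1_right)
    then have "2 * ?s = 0" by (simp only: mult_2)
    with two_unit_nz[OF su] show False by simp
  qed
  from E1 ne1 ne2 c1 have "0 + 1 * ?s + ?s * 1 + 0 + (0 + 1 * ?s + ?s * 1 + 0) = 0"
    by (simp only: if_True if_False simp_thms)
  then have "4 * ?s = 0" by (simp only: four_eq mult_1_left mult_1_right add_0_left add_0_right)
  then show four: "(4::'r) = 0" using unit_cancel[OF su, of 4] by simp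
  note E2 = AC[OF S S x xs x xs m_closed[OF x x]]
  have ne3: "x \<otimes> star x \<noteq> x \<otimes> x" using ne1 by (rule not_sym)
  have ne4: "star x \<otimes> x \<noteq> x \<otimes> x" using ne3 c1 by (metis (no_types))
  show c2: "star x \<otimes> star x = x \<otimes> x"
  proof (rule ccontr)
    assume "star x \<otimes> star x \<noteq> x \<otimes> x"
    with E2 ne3 ne4 have "(1::'r) * 1 + 0 + 0 + 0 + (1 * 1 + 0 + 0 + 0) = 0" 
      by (simp only: if_True if_False simp_thms)
    then have "(2::'r) = 0" by (simp only: one_add_one mult_1_left mult_1_right add_0_left add_0_right)
    with two_nz show False by simp
  qed
  from E2 ne3 ne4 c2 have "(1::'r) * 1 + 0 + 0 + ?s * ?s + (1 * 1 + 0 + 0 + ?s * ?s) = 0" 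
    by (simp only: if_True if_False simp_thms)
  then show "2 * (1 + \<sigma> x * \<sigma> x) = 0" by (simp only: two_eq)
qed


definition cc :: "'g \<Rightarrow> 'g" where "cc x = star x \<otimes> inv x"

lemma sig_star: "x \<in> carrier G \<Longrightarrow> \<sigma> x * \<sigma> (star x) = 1"
  using compat sigma_hom by (metis star_closed)

lemma cfacts:
  assumes x: "x \<in> carrier G" and nx: "star x \<noteq> x"
  shows "cc x \<in> carrier G" "cc x \<otimes> x = star x" "x \<otimes> cc x = star x" "cc x \<otimes> cc x = \<one>"
    "cc x \<otimes> star x = x" "star x \<otimes> cc x = x" "cc x \<noteq> \<one>" "star (cc x) = cc x"
    "2 * (1 - \<sigma> (cc x)) = 0"
proof -
  let ?c = "cc x"
  have xs: "star x \<in> carrier G" using x by simp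
  show c: "?c \<in> carrier G" using x by (simp add: cc_def)
  note N = norm[OF x nx]
  show cx: "?c \<otimes> x = star x" using x by (simp add: cc_def m_assoc)
  have "x \<otimes> ?c = (x \<otimes> star x) \<otimes> inv x" using x by (simp add: cc_def m_assoc)
  also have "\<dots> = star x \<otimes> x \<otimes> inv x" using N(1) by simp
  also have "\<dots> = star x" using x by (simp add: m_assoc)
  finally show xc: "x \<otimes> ?c = star x" .
  have cxs: "?c \<otimes> star x = star x \<otimes> ?c"
  proof -
    have "?c \<otimes> star x = ?c \<otimes> (x \<otimes> ?c)" using xc by simp
    also have "\<dots> = (?c \<otimes> x) \<otimes> ?c" using x c by (simp add: m_assoc)
    finally show ?thesis using cx by simp
  qed
  have "(?c \<otimes> ?c) \<otimes> (x \<otimes> x) = ?c \<otimes> (?c \<otimes> x) \<otimes> x" using x c by (simp add: m_assoc)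
  also have "\<dots> = (?c \<otimes> star x) \<otimes> x" using cx by simp
  also have "\<dots> = star x \<otimes> (?c \<otimes> x)" using cxs x xs c by (simp add: m_assoc)
  also have "\<dots> = x \<otimes> x" using cx N(3) by simp
  finally show cc2: "?c \<otimes> ?c = \<one>" using x c by simp
  have "?c \<otimes> star x = (?c \<otimes> ?c) \<otimes> x" using cx x c by (simp add: m_assoc)
  then show cxs2: "?c \<otimes> star x = x" using cc2 x by simp
  then show xsc: "star x \<otimes> ?c = x" using cxs by simp
  show "?c \<noteq> \<one>" using cx nx x by auto
  have "star x \<otimes> star ?c = star (?c \<otimes> x)" using x c by (simp add: star_mult)
  also have "\<dots> = x" using cx x by simp
  finally have "star x \<otimes> star ?c = star x \<otimes> ?c" using xsc by simp
  then show "star ?c = ?c" using lcanc[OF xs star_closed[OF c] c] by simp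
  have su: "(\<sigma> x * \<sigma> x) dvd 1" using mult_dvd_mono[OF sigma_unit[OF x] sigma_unit[OF x]] by simp
  have "\<sigma> ?c * \<sigma> x = \<sigma> (star x)" using cx sigma_hom[OF c x] by simp
  then have e: "\<sigma> ?c * (\<sigma> x * \<sigma> x) = 1" using sig_star[OF x] by (simp add: ac_simps)
  have "2 * (1 - \<sigma> ?c) * (\<sigma> x * \<sigma> x) = 2 * (1 + \<sigma> x * \<sigma> x) - 4"
    using e by (simp add: algebra_simps)
  also have "\<dots> = 0" using N(2,4) by simp
  finally show "2 * (1 - \<sigma> ?c) = 0" using unit_cancel[OF su] by blast
qed


lemma Wp:
  assumes z: "z \<in> carrier G" and nz: "star z \<noteq> z" and w: "w \<in> carrier G"
    and sw: "star w = w" and tw: "2 * (1 - \<sigma> w) = 0"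
  shows "z \<otimes> w = w \<otimes> z \<or> z \<otimes> w = w \<otimes> star z"
proof (rule ccontr)
  assume H: "\<not> (z \<otimes> w = w \<otimes> z \<or> z \<otimes> w = w \<otimes> star z)"
  have zs: "star z \<in> carrier G" using z by simp
  note E = AC[OF in_S3[OF z nz] in_S2[OF w sw tw] z zs w w m_closed[OF z w]]
  have n1: "star z \<otimes> w \<noteq> z \<otimes> w" using z zs w nz by simp
  have n2: "w \<otimes> z \<noteq> z \<otimes> w" "w \<otimes> star z \<noteq> z \<otimes> w" using H by auto
  from E n1 n2 have "(1::'r) * 2 + 1 * 0 + 0 + 0 + (0 + 0 + 0 + 0) = 0"
    by (simp only: if_True if_False simp_thms)
  then have "(2::'r) = 0" by (simp only: mult_1_left mult_zero_right add_0_left add_0_right)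
  with two_nz show False by simp
qed

lemma Wc:
  assumes x: "x \<in> carrier G" and nx: "star x \<noteq> x" and w: "w \<in> carrier G"
    and sw: "star w = w" and tw: "2 * (1 - \<sigma> w) = 0"
  shows "cc x \<otimes> w = w \<otimes> cc x"
proof -
  let ?c = "cc x"
  note C = cfacts[OF x nx]
  have xs: "star x \<in> carrier G" using x by simp
  have nxs: "star (star x) \<noteq> star x" using x nx by simp
  have A1: "x \<otimes> w = w \<otimes> x \<or> x \<otimes> w = w \<otimes> star x" using Wp[OF x nx w sw tw] .
  have A2: "star x \<otimes> w = w \<otimes> star x \<or> star x \<otimes> w = w \<otimes> x" using Wp[OF xs nxs w sw tw] x by simp
  have "(?c \<otimes> w) \<otimes> x = (w \<otimes> ?c) \<otimes> x"
  proof (cases "x \<otimes> w = w \<otimes> x")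
    case True
    then have T2: "star x \<otimes> w = w \<otimes> star x" using A2 True rcanc[OF w xs x] nx by auto
    have "(?c \<otimes> w) \<otimes> x = ?c \<otimes> (x \<otimes> w)" using True C(1) x w by (simp add: m_assoc)
    also have "\<dots> = (?c \<otimes> x) \<otimes> w" using C(1) x w by (simp add: m_assoc)
    also have "\<dots> = w \<otimes> (?c \<otimes> x)" using C(2) T2 by simp
    finally show ?thesis using C(1) x w by (simp add: m_assoc)
  next
    case False
    then have F1: "x \<otimes> w = w \<otimes> star x" using A1 by auto
    then have F2: "star x \<otimes> w = w \<otimes> x" using A2 rcanc[OF w xs x] nx by auto
    have "(?c \<otimes> w) \<otimes> x = ?c \<otimes> (star x \<otimes> w)" using F2 C(1) x w by (simp add: m_assoc)
    also have "\<dots> = (?c \<otimes> star x) \<otimes> w" using C(1) xs w by (simp add: m_assoc)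
    also have "\<dots> = w \<otimes> (?c \<otimes> x)" using C(5,2) F1 by simp
    finally show ?thesis using C(1) x w by (simp add: m_assoc)
  qed
  then show ?thesis using C(1) x w by simp
qed

lemma L3:
  assumes x: "x \<in> carrier G" and nx: "star x \<noteq> x" and y: "y \<in> carrier G" and ny: "star y \<noteq> y"
    and ne: "cc x \<otimes> y \<noteq> y \<otimes> cc x"
  shows "y \<otimes> cc x = cc x \<otimes> (cc y \<otimes> y)"
proof -
  let ?c = "cc x"
  note C = cfacts[OF x nx]
  note D = cfacts[OF y ny]
  have ys: "star y \<in> carrier G" using y by simp
  note E = AC[OF in_S2[OF C(1) C(8) C(9)] in_S3[OF y ny] C(1) C(1) y ys m_closed[OF y C(1)]]
  have n1: "star y \<otimes> ?c \<noteq> y \<otimes> ?c" using C(1) y ys ny by simp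
  have "?c \<otimes> star y = y \<otimes> ?c"
  proof (rule ccontr)
    assume "?c \<otimes> star y \<noteq> y \<otimes> ?c"
    with E n1 ne have "(1::'r) * 2 + 1 * 0 + 0 + 0 + (0 + 0 + 0 + 0) = 0"
      by (simp only: if_True if_False simp_thms ac_simps)
    then have "(2::'r) = 0" by (simp only: mult_1_left mult_zero_right add_0_left add_0_right)
    with two_nz show False by simp
  qed
  then show ?thesis using D(2) by simp
qed


lemma main_ns:
  assumes x: "x \<in> carrier G" and nx: "star x \<noteq> x" and y: "y \<in> carrier G" and ny: "star y \<noteq> y"
  shows "cc x \<otimes> y = y \<otimes> cc x"
proof (rule ccontr)
  assume ne: "cc x \<otimes> y \<noteq> y \<otimes> cc x"
  define c where "c = cc x"
  define d where "d = cc y"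
  note C = cfacts[OF x nx, folded c_def]
  note D = cfacts[OF y ny, folded d_def]
  have xs: "star x \<in> carrier G" and ys: "star y \<in> carrier G" using x y by auto
  have c: "c \<in> carrier G" and dc: "d \<in> carrier G" using C D by auto
  have cd: "c \<otimes> d = d \<otimes> c" using Wc[OF x nx D(1) D(8) D(9)] unfolding c_def .
  have yc: "y \<otimes> c = c \<otimes> (d \<otimes> y)" using L3[OF x nx y ny ne] unfolding c_def d_def .
  have cned: "c \<noteq> d"
  proof
    assume "c = d"
    then have "c \<otimes> y = y \<otimes> c" using D(2,3) by simp
    then show False using ne unfolding c_def by simp
  qed
  have dnec: "d \<noteq> c" using cned by auto
  have c1: "c \<noteq> \<one>" and d1: "d \<noteq> \<one>" using C D by auto
  have kc: "\<And>Q. Q \<in> carrier G \<Longrightarrow> c \<otimes> (c \<otimes> Q) = Q" using C(4) c by (simp add: m_assoc[symmetric])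
  have kd: "\<And>Q. Q \<in> carrier G \<Longrightarrow> d \<otimes> (d \<otimes> Q) = Q" using D(4) dc by (simp add: m_assoc[symmetric])
  have kdc: "\<And>Q. Q \<in> carrier G \<Longrightarrow> d \<otimes> (c \<otimes> Q) = c \<otimes> (d \<otimes> Q)" using cd c dc by (simp add: m_assoc[symmetric])
  have ycQ: "\<And>Q. Q \<in> carrier G \<Longrightarrow> y \<otimes> (c \<otimes> Q) = c \<otimes> (d \<otimes> (y \<otimes> Q))"
    using yc c dc y by (simp add: m_assoc[symmetric])
  have ydQ: "\<And>Q. Q \<in> carrier G \<Longrightarrow> y \<otimes> (d \<otimes> Q) = d \<otimes> (y \<otimes> Q)"
    using D(2,3) dc y by (simp add: m_assoc[symmetric])
  have xcQ: "\<And>Q. Q \<in> carrier G \<Longrightarrow> x \<otimes> (c \<otimes> Q) = c \<otimes> (x \<otimes> Q)"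
    using C(2,3) c x by (simp add: m_assoc[symmetric])
  have r3: "\<And>Q. Q \<in> carrier G \<Longrightarrow> (c \<otimes> (d \<otimes> Q) = Q) = False"
  proof -
    fix Q assume Q: "Q \<in> carrier G"
    have "c \<otimes> (d \<otimes> Q) = Q \<Longrightarrow> False"
    proof -
      assume "c \<otimes> (d \<otimes> Q) = Q"
      then have "(c \<otimes> d) \<otimes> Q = Q" using Q c dc by (simp add: m_assoc)
      then have "c \<otimes> d = \<one>" using Q c dc by simp
      then have "c \<otimes> d = c \<otimes> c" using C(4) by simp
      then show False using cned c dc by simp
    qed
    then show "(c \<otimes> (d \<otimes> Q) = Q) = False" by blast
  qed
  have r3': "\<And>Q. Q \<in> carrier G \<Longrightarrow> (Q = c \<otimes> (d \<otimes> Q)) = False" using r3 by metis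
  have sx: "star x = c \<otimes> x" using C(2) by simp
  have sy: "star y = d \<otimes> y" using D(2) by simp
  note E = AC[OF in_S3[OF x nx] in_S3[OF y ny] x xs y ys]
  have xdQ: "(\<forall>Q\<in>carrier G. x \<otimes> (d \<otimes> Q) = d \<otimes> (x \<otimes> Q)) \<or> (\<forall>Q\<in>carrier G. x \<otimes> (d \<otimes> Q) = c \<otimes> (d \<otimes> (x \<otimes> Q)))"
  proof (cases "d \<otimes> x = x \<otimes> d")
    case True
    then show ?thesis using x dc by (simp add: m_assoc[symmetric])
  next
    case False
    then have "x \<otimes> d = d \<otimes> (c \<otimes> x)" using L3[OF y ny x nx] unfolding c_def d_def by simp
    then show ?thesis using x dc c kdc by (simp add: m_assoc[symmetric])
  qed
  have nz: "(2::'r) \<noteq> 0" "2 * \<sigma> x \<noteq> 0" "2 * \<sigma> y \<noteq> 0" "2 * (\<sigma> x * \<sigma> y) \<noteq> 0" "2 * (\<sigma> y * \<sigma> x) \<noteq> 0"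
    using two_nz two_unit_nz sigma_unit[OF x] sigma_unit[OF y]
      mult_dvd_mono[OF sigma_unit[OF x] sigma_unit[OF y]] mult_dvd_mono[OF sigma_unit[OF y] sigma_unit[OF x]] by auto
  let ?P = "y \<otimes> x"
  have P: "?P \<in> carrier G" using x y by simp
  have w: "y \<otimes> y \<in> carrier G" using y by simp
  note Ny = norm[OF y ny]
  have sw: "star (y \<otimes> y) = y \<otimes> y" using y Ny(3) by (simp add: star_mult)
  have su: "\<sigma> (y \<otimes> y) = \<sigma> y * \<sigma> y" using y by (simp add: sigma_hom)
  have "2 * (1 - \<sigma> (y \<otimes> y)) = 2 * (1 + \<sigma> y * \<sigma> y) - 4 * (\<sigma> y * \<sigma> y)"
    unfolding su by (simp add: algebra_simps)
  also have "\<dots> = 0" using Ny(2,4) by simp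
  finally have tw: "2 * (1 - \<sigma> (y \<otimes> y)) = 0" .
  note W = Wp[OF x nx w sw tw]
  from xdQ show False
  proof
    assume A: "\<forall>Q\<in>carrier G. x \<otimes> (d \<otimes> Q) = d \<otimes> (x \<otimes> Q)"
    note xA = A[rule_format]
    have nA1: "x \<otimes> y \<noteq> y \<otimes> x"
    proof
      assume xy: "x \<otimes> y = y \<otimes> x"
      show False using E[of "y \<otimes> x"] x y c dc
        by (simp add: sx sy m_assoc kc kd kdc ycQ ydQ xcQ r3 r3' c1 d1 cned dnec c dc xy xA nz)
    qed
    have nA2: "x \<otimes> y \<noteq> c \<otimes> (y \<otimes> x)"
    proof
      assume xy: "x \<otimes> y = c \<otimes> (y \<otimes> x)"
      have xyQ: "\<And>Q. Q \<in> carrier G \<Longrightarrow> x \<otimes> (y \<otimes> Q) = c \<otimes> (y \<otimes> (x \<otimes> Q))"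
      proof -
        fix Q assume Q: "Q \<in> carrier G"
        have "x \<otimes> (y \<otimes> Q) = (x \<otimes> y) \<otimes> Q" using x y Q by (simp add: m_assoc)
        then show "x \<otimes> (y \<otimes> Q) = c \<otimes> (y \<otimes> (x \<otimes> Q))" using xy x y Q c dc by (simp add: m_assoc)
      qed
      show False using W x y c dc
        by (simp add: sx sy m_assoc kc kd kdc ycQ ydQ xcQ r3 r3' c1 d1 cned dnec c dc xy xyQ xA)
    qed
    have nA3: "x \<otimes> y \<noteq> d \<otimes> (y \<otimes> x)"
    proof
      assume xy: "x \<otimes> y = d \<otimes> (y \<otimes> x)"
      show False using E[of "c \<otimes> (d \<otimes> (y \<otimes> x))"] x y c dc
        by (simp add: sx sy m_assoc kc kd kdc ycQ ydQ xcQ r3 r3' c1 d1 cned dnec c dc xy xA nz)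
    qed
    have nA4: "x \<otimes> y \<noteq> c \<otimes> (d \<otimes> (y \<otimes> x))"
    proof
      assume xy: "x \<otimes> y = c \<otimes> (d \<otimes> (y \<otimes> x))"
      have xyQ: "\<And>Q. Q \<in> carrier G \<Longrightarrow> x \<otimes> (y \<otimes> Q) = c \<otimes> (d \<otimes> (y \<otimes> (x \<otimes> Q)))"
      proof -
        fix Q assume Q: "Q \<in> carrier G"
        have "x \<otimes> (y \<otimes> Q) = (x \<otimes> y) \<otimes> Q" using x y Q by (simp add: m_assoc)
        then show "x \<otimes> (y \<otimes> Q) = c \<otimes> (d \<otimes> (y \<otimes> (x \<otimes> Q)))" using xy x y Q c dc by (simp add: m_assoc)
      qed
      show False using W x y c dc
        by (simp add: sx sy m_assoc kc kd kdc ycQ ydQ xcQ r3 r3' c1 d1 cned dnec c dc xy xyQ xA)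
    qed
    show False using E[of "x \<otimes> y"] x y c dc nA1 nA2 nA3 nA4 nA1[symmetric] nA2[symmetric] nA3[symmetric] nA4[symmetric]
      by (simp add: sx sy m_assoc kc kd kdc ycQ ydQ xcQ r3 r3' c1 d1 cned dnec c dc xA nz)
  next
    assume B: "\<forall>Q\<in>carrier G. x \<otimes> (d \<otimes> Q) = c \<otimes> (d \<otimes> (x \<otimes> Q))"
    note xB = B[rule_format]
    have nB1: "x \<otimes> y \<noteq> y \<otimes> x"
    proof
      assume xy: "x \<otimes> y = y \<otimes> x"
      show False using E[of "y \<otimes> x"] x y c dc
        by (simp add: sx sy m_assoc kc kd kdc ycQ ydQ xcQ r3 r3' c1 d1 cned dnec c dc xy xB nz)
    qed
    have nB2: "x \<otimes> y \<noteq> c \<otimes> (y \<otimes> x)"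
    proof
      assume xy: "x \<otimes> y = c \<otimes> (y \<otimes> x)"
      show False using E[of "d \<otimes> (y \<otimes> x)"] x y c dc
        by (simp add: sx sy m_assoc kc kd kdc ycQ ydQ xcQ r3 r3' c1 d1 cned dnec c dc xy xB nz)
    qed
    have nB3: "x \<otimes> y \<noteq> d \<otimes> (y \<otimes> x)"
    proof
      assume xy: "x \<otimes> y = d \<otimes> (y \<otimes> x)"
      show False using E[of "c \<otimes> (d \<otimes> (y \<otimes> x))"] x y c dc
        by (simp add: sx sy m_assoc kc kd kdc ycQ ydQ xcQ r3 r3' c1 d1 cned dnec c dc xy xB nz)
    qed
    have nB4: "x \<otimes> y \<noteq> c \<otimes> (d \<otimes> (y \<otimes> x))"
    proof
      assume xy: "x \<otimes> y = c \<otimes> (d \<otimes> (y \<otimes> x))"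
      show False using E[of "c \<otimes> (y \<otimes> x)"] x y c dc
        by (simp add: sx sy m_assoc kc kd kdc ycQ ydQ xcQ r3 r3' c1 d1 cned dnec c dc xy xB nz)
    qed
    show False using E[of "x \<otimes> y"] x y c dc nB1 nB2 nB3 nB4 nB1[symmetric] nB2[symmetric] nB3[symmetric] nB4[symmetric]
      by (simp add: sx sy m_assoc kc kd kdc ycQ ydQ xcQ r3 r3' c1 d1 cned dnec c dc xB nz)
  qed
qed


lemma main:
  assumes x: "x \<in> carrier G" and y: "y \<in> carrier G"
  shows "(star x \<otimes> inv x) \<otimes> y = y \<otimes> (star x \<otimes> inv x)"
proof (cases "star x = x")
  case True
  then show ?thesis using x y by simp
next
  case nx: False
  note C = cfacts[OF x nx]
  have xs: "star x \<in> carrier G" using x by simp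
  have "cc x \<otimes> y = y \<otimes> cc x"
  proof (cases "star y = y")
    case False
    then show ?thesis using main_ns[OF x nx y] by simp
  next
    case sy: True
    show ?thesis
    proof (cases "star (y \<otimes> x) = y \<otimes> x")
      case False
      have M: "cc x \<otimes> (y \<otimes> x) = (y \<otimes> x) \<otimes> cc x" using main_ns[OF x nx m_closed[OF y x] False] by simp
      have "(cc x \<otimes> y) \<otimes> x = (y \<otimes> cc x) \<otimes> x"
      proof -
        have "(cc x \<otimes> y) \<otimes> x = (y \<otimes> x) \<otimes> cc x" using M C(1) x y by (simp add: m_assoc)
        also have "\<dots> = y \<otimes> (cc x \<otimes> x)" using C(1,2,3) x y by (simp add: m_assoc)
        finally show ?thesis using C(1) x y by (simp add: m_assoc)
      qed
      then show ?thesis using C(1) x y by simp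
    next
      case T1: True
      show ?thesis
      proof (cases "star (y \<otimes> star x) = y \<otimes> star x")
        case False
        have M: "cc x \<otimes> (y \<otimes> star x) = (y \<otimes> star x) \<otimes> cc x" using main_ns[OF x nx m_closed[OF y xs] False] by simp
        have "(cc x \<otimes> y) \<otimes> star x = (y \<otimes> cc x) \<otimes> star x"
        proof -
          have "(cc x \<otimes> y) \<otimes> star x = (y \<otimes> star x) \<otimes> cc x" using M C(1) xs y by (simp add: m_assoc)
          also have "\<dots> = y \<otimes> (cc x \<otimes> star x)" using C(1,5,6) xs y by (simp add: m_assoc)
          finally show ?thesis using C(1) xs y by (simp add: m_assoc)
        qed
        then show ?thesis using C(1) xs y by simp
      next
        case T2: True
        have e1: "star x \<otimes> y = y \<otimes> x" using T1 x y sy by (simp add: star_mult)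
        have e2: "x \<otimes> y = y \<otimes> star x" using T2 x y sy by (simp add: star_mult)
        have "(cc x \<otimes> y) \<otimes> x = cc x \<otimes> (star x \<otimes> y)" using e1 C(1) x y by (simp add: m_assoc)
        also have "\<dots> = x \<otimes> y" using C(1,5) xs y by (simp add: m_assoc[symmetric])
        also have "\<dots> = (y \<otimes> cc x) \<otimes> x" using e2 C(1,2) x y by (simp add: m_assoc)
        finally show ?thesis using C(1) x y by simp
      qed
    qed
  qed
  then show ?thesis unfolding cc_def .
qed

end

theorem lemma3p11:
  fixes G :: "('g, 'b) monoid_scheme"
    and star :: "'g \<Rightarrow> 'g"
    and \<sigma> :: "'g \<Rightarrow> 'r::comm_ring_1"
  assumes grp: "group G"
    and char: "CHAR('r) \<noteq> 2"
    and star_closed: "\<And>x. x \<in> carrier G \<Longrightarrow> star x \<in> carrier G"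
    and star_mult: "\<And>x y. x \<in> carrier G \<Longrightarrow> y \<in> carrier G \<Longrightarrow>
                       star (x \<otimes>\<^bsub>G\<^esub> y) = star y \<otimes>\<^bsub>G\<^esub> star x"
    and star_star: "\<And>x. x \<in> carrier G \<Longrightarrow> star (star x) = x"
    and sigma_unit: "\<And>x. x \<in> carrier G \<Longrightarrow> \<sigma> x dvd 1"
    and sigma_hom: "\<And>x y. x \<in> carrier G \<Longrightarrow> y \<in> carrier G \<Longrightarrow>
                       \<sigma> (x \<otimes>\<^bsub>G\<^esub> y) = \<sigma> x * \<sigma> y"
    and sigma_nontriv: "\<exists>x\<in>carrier G. \<sigma> x \<noteq> 1"
    and compat: "\<And>x. x \<in> carrier G \<Longrightarrow> \<sigma> (x \<otimes>\<^bsub>G\<^esub> star x) = 1"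
    and anticomm: "anticommutative G (S_set G star \<sigma>)"
  shows "\<forall>x\<in>carrier G. star x \<otimes>\<^bsub>G\<^esub> inv\<^bsub>G\<^esub> x \<in> group_center G"
proof -
  have two: "(2::'r) \<noteq> 0"
  proof
    assume "(2::'r) = 0"
    then have "of_nat 2 = (0::'r)" by simp
    then have "CHAR('r) dvd 2" by (simp only: of_nat_eq_0_iff_char_dvd)
    then have "CHAR('r) = 1 \<or> CHAR('r) = 2"
      using dvd_imp_le[of "CHAR('r)" 2] by (cases "CHAR('r)"; auto; presburger)
    with char have "CHAR('r) = 1" by simp
    then have "of_nat 1 = (0::'r)" by (simp only: of_nat_eq_0_iff_char_dvd) simp
    then have "(1::'r) = 0" by simp
    then have "\<And>a::'r. a = 1" by (metis mult_1 mult_zero_left)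
    with sigma_nontriv show False by blast
  qed
  interpret acs G star \<sigma>
    by (intro acs.intro grp acs_axioms.intro two star_closed star_mult star_star sigma_unit sigma_hom compat anticomm)
  show ?thesis
    unfolding group_center_def using main by auto
qed

end
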